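(* Let $P$ be an $r$-differential poset and let $j_{m-1}\lessdot j_m$ be a covering pair in $P$, with $j_m$ of rank $m$, such that each of $j_{m-1}$ and $j_m$ covers at most one element of $P$. Then for every integer $n\ge m$ there is a saturated chain $j_{m-1}\lessdot j_m\lessdot j_{m+1}\lessdot\cdots\lessdot j_{n-1}\lessdot j_n$ in $P$ in which every $j_\ell$ covers at most one element of $P$.
   Context: An $r$-differential poset ($r$ a positive integer) is a graded poset with a minimum element, finite intervals and finite rank sets, such that (D1) an element covering exactly $m$ elements is covered by exactly $m+r$ elements, and (D2) two distinct elements that both cover exactly $m$ common elements are both covered by exactly $m$ common elements. $x\lessdot y$ means $y$ covers $x$. *)

theory Defs
  imports Main
begin

text \<open>The poset is the whole type 'a (with its partial order). covers x y: y covers x.\<close>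
definition covers :: "'a::order \<Rightarrow> 'a \<Rightarrow> bool" where
  "covers x y \<longleftrightarrow> x < y \<and> \<not> (\<exists>z. x < z \<and> z < y)"

definition lower_covers :: "'a::order \<Rightarrow> 'a set" where
  "lower_covers x = {z. covers z x}"

definition upper_covers :: "'a::order \<Rightarrow> 'a set" where
  "upper_covers x = {y. covers x y}"

definition graded_locfin_poset :: "('a::order \<Rightarrow> nat) \<Rightarrow> bool" where
  "graded_locfin_poset rk \<longleftrightarrow>
     (\<exists>z. (\<forall>x. z \<le> x) \<and> rk z = 0) \<and>
     (\<forall>x y. covers x y \<longrightarrow> rk y = rk x + 1) \<and>
     (\<forall>x y::'a. finite {z. x \<le> z \<and> z \<le> y}) \<and>
     (\<forall>n. finite {x. rk x = n})"

definition differential_poset :: "nat \<Rightarrow> ('a::order \<Rightarrow> nat) \<Rightarrow> bool" where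
  "differential_poset r rk \<longleftrightarrow> r > 0 \<and> graded_locfin_poset rk \<and>
     (\<forall>x::'a. card (upper_covers x) = card (lower_covers x) + r) \<and>
     (\<forall>x y::'a. x \<noteq> y \<longrightarrow>
        card (lower_covers x \<inter> lower_covers y) = card (upper_covers x \<inter> upper_covers y))"

end

theory Submission
  imports Defs
begin

lemma lower_fin:
  fixes rk :: "'a::order \<Rightarrow> nat"
  assumes "differential_poset r rk"
  shows "finite (lower_covers (x::'a::order))"
proof -
  have g: "graded_locfin_poset rk" using assms unfolding differential_poset_def by blast
  have "lower_covers x \<subseteq> {z. rk z = rk x - 1}"
    using g unfolding lower_covers_def graded_locfin_poset_def by auto
  moreover have "finite {z. rk z = rk x - 1}" using g unfolding graded_locfin_poset_def by blast
  ultimately show ?thesis by (rule finite_subset)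
qed

lemma upper_fin:
  fixes rk :: "'a::order \<Rightarrow> nat"
  assumes "differential_poset r rk"
  shows "finite (upper_covers (x::'a::order))"
proof -
  have "card (upper_covers x) = card (lower_covers x) + r"
    using assms unfolding differential_poset_def by blast
  moreover have "r > 0"
    using assms unfolding differential_poset_def by blast
  ultimately
  have "card (upper_covers x) \<noteq> 0" by simp
  then show ?thesis using card.infinite by metis
qed

lemma step:
  fixes rk :: "'a::order \<Rightarrow> nat"
  assumes D: "differential_poset r rk"
    and cxy: "covers x y" and lx: "card (lower_covers (x::'a::order)) \<le> 1"
    and ly: "card (lower_covers y) \<le> 1"
  shows "\<exists>z. covers y z \<and> card (lower_covers z) \<le> 1"
proof (rule ccontr)
  assume nz: "\<not> ?thesis"
  have Ly: "lower_covers y = {x}"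
  proof -
    have "x \<in> lower_covers y" using cxy unfolding lower_covers_def by simp
    moreover have "finite (lower_covers y)" using lower_fin[OF D] .
    ultimately have "card (lower_covers y) \<noteq> 0" by auto
    then have "card (lower_covers y) \<ge> 1" by linarith
    then have "card (lower_covers y) = 1" using ly by simp
    then obtain u where "lower_covers y = {u}" by (rule card_1_singletonE)
    then show ?thesis using \<open>x \<in> lower_covers y\<close> by simp
  qed
  have "\<forall>z\<in>upper_covers y. \<exists>w. covers w z \<and> w \<noteq> y"
  proof
    fix z assume z: "z \<in> upper_covers y"
    show "\<exists>w. covers w z \<and> w \<noteq> y"
    proof (rule ccontr)
      assume "\<nexists>w. covers w z \<and> w \<noteq> y"
      then have "lower_covers z \<subseteq> {y}" unfolding lower_covers_def by auto
      then have "card (lower_covers z) \<le> card {y}" by (intro card_mono) auto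
      then have "card (lower_covers z) \<le> 1" by simp
      then show False using nz z unfolding upper_covers_def by auto
    qed
  qed
  then obtain f where f: "\<And>z. z \<in> upper_covers y \<Longrightarrow> covers (f z) z \<and> f z \<noteq> y"
    by metis
  have key: "x \<in> lower_covers (f z) \<and> upper_covers y \<inter> upper_covers (f z) = {z}"
    if z: "z \<in> upper_covers y" for z
  proof -
    have fz: "covers (f z) z" "f z \<noteq> y" using f[OF z] by auto
    have eq: "card (lower_covers y \<inter> lower_covers (f z)) = card (upper_covers y \<inter> upper_covers (f z))"
      using D fz(2)[symmetric] unfolding differential_poset_def by blast
    have zin: "z \<in> upper_covers y \<inter> upper_covers (f z)"
      using z fz unfolding upper_covers_def by auto
    have fin: "finite (upper_covers y \<inter> upper_covers (f z))" using upper_fin[OF D] by blast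
    have "card (upper_covers y \<inter> upper_covers (f z)) \<noteq> 0"
      using zin fin by auto
    then have "card (upper_covers y \<inter> upper_covers (f z)) \<ge> 1" by linarith
    moreover have "card (lower_covers y \<inter> lower_covers (f z)) \<le> 1"
    proof -
      have "card (lower_covers y \<inter> lower_covers (f z)) \<le> card {x}"
        unfolding Ly by (intro card_mono) auto
      then show ?thesis by simp
    qed
    ultimately have c1: "card (upper_covers y \<inter> upper_covers (f z)) = 1"
      "card (lower_covers y \<inter> lower_covers (f z)) = 1" using eq by linarith+
    from c1(2) have "x \<in> lower_covers (f z)" unfolding Ly
      by (cases "x \<in> lower_covers (f z)") auto
    moreover from c1(1) zin have "upper_covers y \<inter> upper_covers (f z) = {z}"
    proof -
      obtain u where u: "upper_covers y \<inter> upper_covers (f z) = {u}"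
        using c1(1) by (rule card_1_singletonE)
      then show ?thesis using zin by simp
    qed
    ultimately show ?thesis by blast
  qed
  have inj: "inj_on f (upper_covers y)"
  proof (rule inj_onI)
    fix z z' assume z: "z \<in> upper_covers y" and z': "z' \<in> upper_covers y" and e: "f z = f z'"
    have "z' \<in> upper_covers y \<inter> upper_covers (f z)"
      using z' f[OF z'] e unfolding upper_covers_def by auto
    then show "z = z'" using key[OF z] by auto
  qed
  have sub: "f ` upper_covers y \<subseteq> upper_covers x - {y}"
    using key f unfolding lower_covers_def upper_covers_def by auto
  have "card (upper_covers y) \<le> card (upper_covers x - {y})"
    using card_inj_on_le[OF inj sub] upper_fin[OF D] by blast
  also have "\<dots> = card (upper_covers x) - 1"
    using cxy upper_fin[OF D] unfolding upper_covers_def by simp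
  also have "\<dots> \<le> r"
  proof -
    have "card (upper_covers x) = card (lower_covers x) + r" using D unfolding differential_poset_def by blast
    then show ?thesis using lx by simp
  qed
  finally have "card (upper_covers y) \<le> r" .
  moreover have "card (upper_covers y) = card (lower_covers y) + r" using D unfolding differential_poset_def by blast
  then have "card (upper_covers y) = 1 + r" using Ly by simp
  ultimately show False by simp
qed

fun chainseq :: "('a \<Rightarrow> 'a) \<Rightarrow> 'a \<Rightarrow> 'a \<Rightarrow> nat \<Rightarrow> 'a" where
  "chainseq g a b 0 = a"
| "chainseq g a b (Suc 0) = b"
| "chainseq g a b (Suc (Suc k)) = g (chainseq g a b (Suc k))"

theorem proposition6p11:
  fixes rk :: "'a::order \<Rightarrow> nat" and r m :: nat and a b :: 'a
  assumes "differential_poset r rk"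
    and "covers a b" and "rk b = m"
    and "card (lower_covers a) \<le> 1" and "card (lower_covers b) \<le> 1"
  shows "\<forall>n\<ge>m. \<exists>j :: nat \<Rightarrow> 'a. j (m - 1) = a \<and> j m = b \<and>
           (\<forall>l. m - 1 \<le> l \<and> l < n \<longrightarrow> covers (j l) (j (l + 1))) \<and>
           (\<forall>l. m - 1 \<le> l \<and> l \<le> n \<longrightarrow> card (lower_covers (j l)) \<le> 1)"
proof (intro allI impI)
  fix n assume "m \<le> n"
  define g where "g = (\<lambda>y::'a. SOME z. covers y z \<and> card (lower_covers z) \<le> 1)"
  let ?s = "chainseq g a b"
  have inv: "covers (?s k) (?s (Suc k)) \<and> card (lower_covers (?s k)) \<le> 1 \<and>
       card (lower_covers (?s (Suc k))) \<le> 1" for k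
  proof (induction k)
    case 0 then show ?case using assms by simp
  next
    case (Suc k)
    then have "\<exists>z. covers (?s (Suc k)) z \<and> card (lower_covers z) \<le> 1"
      using step[OF assms(1)] by blast
    then have "covers (?s (Suc k)) (g (?s (Suc k))) \<and> card (lower_covers (g (?s (Suc k)))) \<le> 1"
      unfolding g_def by (rule someI_ex)
    then show ?case using Suc by simp
  qed
  have m1: "m \<ge> 1"
  proof -
    have "graded_locfin_poset rk" using assms(1) unfolding differential_poset_def by blast
    then have "rk b = rk a + 1" using assms(2) unfolding graded_locfin_poset_def by blast
    then show ?thesis using assms(3) by simp
  qed
  show "\<exists>j :: nat \<Rightarrow> 'a. j (m - 1) = a \<and> j m = b \<and>
           (\<forall>l. m - 1 \<le> l \<and> l < n \<longrightarrow> covers (j l) (j (l + 1))) \<and>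
           (\<forall>l. m - 1 \<le> l \<and> l \<le> n \<longrightarrow> card (lower_covers (j l)) \<le> 1)"
  proof (rule exI[of _ "\<lambda>l. ?s (l - (m - 1))"], intro conjI allI impI)
    show "?s ((m - 1) - (m - 1)) = a" by simp
    show "?s (m - (m - 1)) = b" using m1 by (simp add: Suc_diff_le)
  next
    fix l assume l: "m - 1 \<le> l \<and> l < n"
    then have "l + 1 - (m - 1) = Suc (l - (m - 1))" by (simp add: Suc_diff_le)
    then show "covers (?s (l - (m - 1))) (?s (l + 1 - (m - 1)))" using inv by simp
  next
    fix l assume "m - 1 \<le> l \<and> l \<le> n"
    show "card (lower_covers (?s (l - (m - 1)))) \<le> 1" using inv by blast
  qed
qed

end
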